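(* Let $N\to\infty$, $p=p(N)$ with $p(1-p)N\to\infty$, and $S=S(N)$, $T=T(N)$ such that $N-S$ and $N+S-T$ are nonnegative integers, $pS/(p(1-p)N)^{1/2}\to\infty$, $pS=o((p(1-p)N)^{2/3})$, and $T=o(N)$. Let $Z_1\sim B(N-S,p)$ and $Z_2\sim B(N+S-T,p)$ be independent. Then for all sufficiently large $N$, $$\mathbb{P}(Z_1=Z_2+pT)<\frac{S}{2\pi(1-p)N}\exp\!\left(-\frac{2pS^2}{(1-p)(2N-T)}+o(1)\right)+\frac{3}{\pi pS}\exp\!\left(-\frac{9pS^2}{8(1-p)N}\right),$$ where $o(1)\to0$ as $N\to\infty$.
   Context: $B(n,p)$ denotes a binomial random variable with parameters $n$ and $p$. *)

theory Defs
  imports "HOL-Probability.Probability" "HOL-Library.Landau_Symbols"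
begin

end

theory Submission
  imports Defs
begin


lemma cbin_step_nat: "((2*Suc m) choose Suc m) * (m+1) = ((2*m) choose m) * 2 * (2*m+1)"
proof -
  have e1: "Suc (2*m+1) * ((2*m+1) choose m) = (Suc (2*m+1) choose (Suc m)) * Suc m"
    by (rule Suc_times_binomial_eq)
  have e2: "Suc (2*m) * ((2*m) choose m) = (Suc (2*m) choose (Suc m)) * Suc m"
    by (rule Suc_times_binomial_eq)
  have e3: "Suc (2*m) choose (Suc m) = Suc (2*m) choose m"
    using binomial_symmetric[of m "Suc (2*m)"] by simp
  obtain a b c where a: "a = (2*Suc m) choose Suc m" and b: "b = (2*m+1) choose m" and c: "c = (2*m) choose m" by blast
  have 1: "(2*m+2) * b = a * (m+1)" using e1 a b by simp
  have 2: "(2*m+1) * c = b * (m+1)" using e2 e3 b c by simp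
  have "a * (m+1) * (m+1) = c * 2 * (2*m+1) * (m+1)"
  proof -
    have "a * (m+1) * (m+1) = (2*m+2) * (b * (m+1))" using 1 by (metis mult.assoc mult.commute)
    also have "\<dots> = (2*m+2) * ((2*m+1) * c)" using 2 by simp
    finally show ?thesis by (simp add: algebra_simps)
  qed
  hence "a * (m+1) = c * 2 * (2*m+1)" by (metis mult_right_cancel add_is_0 one_neq_zero)
  thus ?thesis using a c by simp
qed

lemma cbin_sq: "(real ((2*m) choose m) / 4^m)^2 * (2*m+1) \<le> 1"
proof (induction m)
  case 0 thus ?case by simp
next
  case (Suc m)
  define a where "a = real ((2*m) choose m) / 4^m"
  obtain B C where B: "B = real ((2*Suc m) choose Suc m)" and C: "C = real ((2*m) choose m)" by blast
  have "B * (m+1) = C * 2 * (2*m+1)"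
    using arg_cong[OF cbin_step_nat[of m], of real] B C by (simp only: of_nat_mult of_nat_add of_nat_1 of_nat_numeral)
  hence BB: "B = C * 2 * (2*m+1) / (m+1)" by (simp add: field_simps)
  have aC: "a = C / 4^m" by (simp add: a_def C)
  have e: "B / 4^Suc m = a * (2*m+1) / (2*m+2)"
    unfolding BB aC by (simp add: divide_simps)
  have "(a * (2*m+1) / (2*m+2))^2 * (2*Suc m+1) = (a^2 * (2*m+1)) * ((2*m+1)*(2*m+3) / (2*m+2)^2)"
    by (simp add: field_simps power2_eq_square)
  also have "\<dots> \<le> 1 * 1"
  proof (rule mult_mono)
    show "a^2 * (2*m+1) \<le> 1" using Suc a_def by simp
    have "real ((2*m+1)*(2*m+3)) \<le> (2*m+2)^2" by (simp add: power2_eq_square algebra_simps)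
    thus "real ((2*m+1)*(2*m+3)) / (2*m+2)^2 \<le> 1" by (simp add: divide_le_eq_1)
  qed auto
  finally show ?case using e B by simp
qed

lemma binom_half_sq: "(real (M choose j) / 2^M)^2 * (M+1) \<le> 1"
proof (cases "even M")
  case True
  then obtain m where M: "M = 2*m" by blast
  have "real (M choose j) \<le> real ((2*m) choose m)" using binomial_maximum'[of m j] M by simp
  hence "real (M choose j) / 2^M \<le> real ((2*m) choose m) / 4^m"
    by (simp add: M power_mult divide_right_mono)
  hence "(real (M choose j) / 2^M)^2 \<le> (real ((2*m) choose m) / 4^m)^2"
    by (intro power_mono) auto
  hence "(real (M choose j) / 2^M)^2 * (M+1) \<le> (real ((2*m) choose m) / 4^m)^2 * (2*m+1)"
    by (intro mult_mono) (auto simp: M)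
  thus ?thesis using cbin_sq[of m] by linarith
next
  case False
  then obtain m where M: "M = 2*m+1" using oddE by blast
  have md: "M div 2 = m" using M by simp
  have "real (M choose j) \<le> real (M choose m)" using binomial_maximum[of M j] md by simp
  have pas: "(2*Suc m) choose Suc m = 2 * (M choose m)"
  proof -
    have "(2*Suc m) choose Suc m = (Suc (2*m) choose m) + (Suc (2*m) choose Suc m)"
      by simp
    moreover have "Suc (2*m) choose Suc m = Suc (2*m) choose m"
      using binomial_symmetric[of m "Suc (2*m)"] by simp
    ultimately show ?thesis using M by simp
  qed
  have eq: "real (M choose m) / 2^M = real ((2*Suc m) choose Suc m) / 4^Suc m"
  proof -
    have p2: "(2::real)^M = 2 * 4^m" using M by (simp add: power_mult)
    show ?thesis using pas unfolding p2 by simp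
  qed
  have "(real (M choose j) / 2^M)^2 \<le> (real (M choose m) / 2^M)^2"
    using \<open>real (M choose j) \<le> real (M choose m)\<close> by (intro power_mono divide_right_mono) auto
  also have "\<dots> = (real ((2*Suc m) choose Suc m) / 4^Suc m)^2" using eq by simp
  finally have "(real (M choose j) / 2^M)^2 * (M+1) \<le> (real ((2*Suc m) choose Suc m) / 4^Suc m)^2 * (2*Suc m+1)"
    by (rule mult_mono) (auto simp: M)
  thus ?thesis using cbin_sq[of "Suc m"] by linarith
qed

lemma binom_mix:
  fixes q :: real
  assumes "0 \<le> q" "2*q \<le> 1"
  shows "real (n choose j) * q^j * (1-q)^(n-j) =
    (\<Sum>M\<le>n. real (n choose M) * (2*q)^M * (1-2*q)^(n-M) * (real (M choose j) / 2^M))"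
proof (cases "j \<le> n")
  case False
  have "\<And>M. M \<le> n \<Longrightarrow> (M choose j) = 0" using False by simp
  thus ?thesis using False by (simp add: binomial_eq_0)
next
  case True
  define h where "h M = real (n choose M) * (2*q)^M * (1-2*q)^(n-M) * (real (M choose j) / 2^M)" for M
  have h2: "h M = real (n choose M) * real (M choose j) * q^M * (1-2*q)^(n-M)" for M
    by (simp add: h_def power_mult_distrib)
  have "(\<Sum>M\<le>n. h M) = (\<Sum>M\<in>{j..n}. h M)"
    by (rule sum.mono_neutral_right) (auto simp: h_def)
  also have "\<dots> = (\<Sum>l\<in>{0..n-j}. h (l+j))"
    using sum.shift_bounds_cl_nat_ivl[of h 0 j "n-j"] True by simp
  also have "\<dots> = (\<Sum>l\<in>{0..n-j}. real (n choose j) * q^j * (real ((n-j) choose l) * q^l * (1-2*q)^(n-j-l)))"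
  proof (rule sum.cong[OF refl])
    fix l assume l: "l \<in> {0..n-j}"
    have cm: "(n choose (l+j)) * ((l+j) choose j) = (n choose j) * ((n-j) choose l)"
      using choose_mult[of j "l+j" n] l True by simp
    have "h (l+j) = real ((n choose (l+j)) * ((l+j) choose j)) * q^(l+j) * (1-2*q)^(n-(l+j))"
      by (simp add: h2)
    also have "\<dots> = real (n choose j) * q^j * (real ((n-j) choose l) * q^l * (1-2*q)^(n-j-l))"
      unfolding cm by (simp add: power_add algebra_simps)
    finally show "h (l+j) = \<dots>" .
  qed
  also have "\<dots> = real (n choose j) * q^j * (\<Sum>l\<le>n-j. real ((n-j) choose l) * q^l * (1-2*q)^(n-j-l))"
    by (simp only: sum_distrib_left atLeast0AtMost)
  also have "\<dots> = real (n choose j) * q^j * (q + (1-2*q))^(n-j)"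
    by (simp only: binomial_ring)
  also have "\<dots> = real (n choose j) * q^j * (1-q)^(n-j)" by simp
  finally show ?thesis by (simp add: h_def)
qed

lemma binom_inv_sum:
  fixes r :: real
  assumes r: "0 \<le> r" "r \<le> 1"
  shows "(\<Sum>M\<le>n. real (n choose M) * r^M * (1-r)^(n-M) / (M+1)) * ((n+1)*r) \<le> 1"
proof -
  define g where "g i = real (Suc n choose i) * r^i * (1-r)^(Suc n - i)" for i
  have g0: "g i \<ge> 0" for i using r by (simp add: g_def)
  have "(\<Sum>M\<le>n. real (n choose M) * r^M * (1-r)^(n-M) / (M+1)) * ((n+1)*r)
      = (\<Sum>M\<le>n. g (Suc M))"
    unfolding sum_distrib_right
  proof (rule sum.cong[OF refl])
    fix M assume "M \<in> {..n}"
    have "real (Suc n) * real (n choose M) = real (Suc n choose Suc M) * real (Suc M)"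
      using arg_cong[OF Suc_times_binomial_eq[of n M], of real] by (simp only: of_nat_mult)
    hence e: "real (n choose M) * (n+1) / (M+1) = real (Suc n choose Suc M)"
      by (simp add: field_simps)
    have "real (n choose M) * r^M * (1-r)^(n-M) / (M+1) * ((n+1)*r)
       = (real (n choose M) * (n+1) / (M+1)) * r^(Suc M) * (1-r)^(Suc n - Suc M)"
      by (simp add: field_simps)
    also have "\<dots> = g (Suc M)" unfolding g_def by (simp only: e)
    finally show "real (n choose M) * r^M * (1-r)^(n-M) / (M+1) * ((n+1)*r) = g (Suc M)" .
  qed
  also have "\<dots> \<le> g 0 + (\<Sum>M\<le>n. g (Suc M))" using g0 by simp
  also have "\<dots> = (\<Sum>i\<le>Suc n. g i)" by (simp only: sum.atMost_Suc_shift)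
  also have "\<dots> = (r + (1-r))^(Suc n)" unfolding g_def by (simp only: binomial_ring)
  finally show ?thesis by (simp add: add.commute)
qed

lemma binom_pmf_sq_half:
  fixes q :: real
  assumes q: "0 < q" "q \<le> 1/2"
  shows "(real (n choose j) * q^j * (1-q)^(n-j))^2 \<le> 1 / ((n+1) * (2*q))"
proof -
  define r where "r = 2*q"
  define w where "w M = real (n choose M) * r^M * (1-r)^(n-M)" for M
  define c where "c M = real (M choose j) / 2^M" for M :: nat
  have r: "0 < r" "r \<le> 1" using q by (auto simp: r_def)
  have w0: "w M \<ge> 0" for M using r by (simp add: w_def)
  have "real (n choose j) * q^j * (1-q)^(n-j) = (\<Sum>M\<le>n. w M * c M)"
    using binom_mix[of q n j] q by (simp add: w_def c_def r_def)
  also have "\<dots> = (\<Sum>M\<le>n. sqrt (w M) * (sqrt (w M) * c M))"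
    using w0 by (simp add: mult.assoc[symmetric])
  finally have "(real (n choose j) * q^j * (1-q)^(n-j))^2 \<le> (\<Sum>M\<le>n. (sqrt (w M))^2) * (\<Sum>M\<le>n. (sqrt (w M) * c M)^2)"
    using Cauchy_Schwarz_ineq_sum by metis
  also have "(\<Sum>M\<le>n. (sqrt (w M))^2) = 1"
  proof -
    have "(\<Sum>M\<le>n. (sqrt (w M))^2) = (\<Sum>M\<le>n. w M)" using w0 by simp
    also have "\<dots> = (r + (1-r))^n" unfolding w_def by (simp only: binomial_ring)
    finally show ?thesis by simp
  qed
  also have "(\<Sum>M\<le>n. (sqrt (w M) * c M)^2) \<le> (\<Sum>M\<le>n. w M / (M+1))"
  proof (rule sum_mono)
    fix M assume "M \<in> {..n}"
    have "c M ^2 * (M+1) \<le> 1" using binom_half_sq[of M j] by (simp add: c_def)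
    hence "c M ^2 \<le> 1 / (M+1)" by (simp add: field_simps)
    hence "w M * c M^2 \<le> w M * (1/(M+1))" using w0 by (intro mult_left_mono) auto
    thus "(sqrt (w M) * c M)^2 \<le> w M / (M+1)" using w0 by (simp add: power_mult_distrib)
  qed
  also have "\<dots> \<le> 1 / ((n+1)*r)"
  proof -
    have "(\<Sum>M\<le>n. w M / (M+1)) * ((n+1)*r) \<le> 1"
      using binom_inv_sum[of r n] r by (simp add: w_def add.commute)
    moreover have "(n+1)*r > 0" using r by simp
    ultimately show ?thesis by (simp add: pos_le_divide_eq)
  qed
  finally show ?thesis by (simp add: r_def add.commute)
qed

lemma binom_pmf_sq:
  fixes q :: real
  assumes q: "0 < q" "q < 1"
  shows "(real (n choose j) * q^j * (1-q)^(n-j))^2 \<le> 1 / (2*(n+1)*q*(1-q))"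
proof (cases "q \<le> 1/2")
  case True
  have a: "2*(real n+1)*q*(1-q) \<le> (real n+1)*(2*q)"
  proof -
    have eq: "(real n+1)*(2*q) - 2*(real n+1)*q*(1-q) = 2*(real n+1)*q*q" by (simp add: algebra_simps)
    have "0 \<le> 2*(real n+1)*q*q" using q by simp
    thus ?thesis using eq by linarith
  qed
  have "1 / ((real n+1) * (2*q)) \<le> 1 / (2*(real n+1)*q*(1-q))"
    by (rule divide_left_mono[OF a]) (use q in auto)
  thus ?thesis using binom_pmf_sq_half[of q n j] q True by linarith
next
  case False
  show ?thesis
  proof (cases "j \<le> n")
    case False
    thus ?thesis using q by (simp add: binomial_eq_0)
  next
    case True
    have e: "real (n choose j) * q^j * (1-q)^(n-j) = real (n choose (n-j)) * (1-q)^(n-j) * (1-(1-q))^(n-(n-j))"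
      using True binomial_symmetric[OF True] by simp
    have a: "2*(real n+1)*q*(1-q) \<le> (real n+1)*(2*(1-q))"
    proof -
      have eq: "(real n+1)*(2*(1-q)) - 2*(real n+1)*q*(1-q) = 2*(real n+1)*(1-q)*(1-q)" by (simp add: algebra_simps)
      have "0 \<le> 2*(real n+1)*(1-q)*(1-q)" using q by simp
      thus ?thesis using eq by linarith
    qed
    have "1 / ((real n+1) * (2*(1-q))) \<le> 1 / (2*(real n+1)*q*(1-q))"
      by (rule divide_left_mono[OF a]) (use q in auto)
    thus ?thesis using binom_pmf_sq_half[of "1-q" n "n-j"] q False unfolding e by linarith
  qed
qed

lemma binom_tilt:
  fixes p t :: real
  assumes p: "0 < p" "p < 1"
  defines "D \<equiv> 1 - p + p * exp t"
  defines "q \<equiv> p * exp t / D"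
  shows "real (n choose j) * p^j * (1-p)^(n-j) = D^n * exp (- t * j) * (real (n choose j) * q^j * (1-q)^(n-j))"
proof (cases "j \<le> n")
  case False thus ?thesis by (simp add: binomial_eq_0)
next
  case True
  have D: "D > 0" using p unfolding D_def by (smt (verit) exp_gt_zero mult_pos_pos)
  have q1: "1 - q = (1-p) / D" using D unfolding q_def D_def by (simp add: field_simps)
  have Dn: "D^n = D^j * D^(n-j)" using True by (simp flip: power_add)
  have ex: "exp (- t * j) * exp t ^ j = 1" by (simp add: exp_of_nat_mult[symmetric] exp_add[symmetric])
  have r: "real (n choose j) * q^j * (1-q)^(n-j) = real (n choose j) * (p^j * exp t ^ j / D^j) * ((1-p)^(n-j) / D^(n-j))"
    unfolding q1 unfolding q_def by (simp add: power_divide power_mult_distrib)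
  obtain X Y a b e where X: "X = D^j" and Y: "Y = D^(n-j)" and a: "a = exp t ^ j" and b: "b = (1-p)^(n-j)" and e: "e = exp (- t * j)" by blast
  have X0: "X \<noteq> 0" using D X by simp
  have Y0: "Y \<noteq> 0" using D Y by simp
  have ea: "e * a = 1" using ex a e by simp
  have "X * Y * e * (real (n choose j) * (p^j * a / X) * (b / Y)) = real (n choose j) * p^j * b * (e * a)"
    using X0 Y0 by (simp add: field_simps)
  hence "X * Y * e * (real (n choose j) * (p^j * a / X) * (b / Y)) = real (n choose j) * p^j * b" using ea by simp
  thus ?thesis unfolding r Dn using X Y a b e by simp
qed

lemma exp_rem: "exp (y::real) \<le> 1 + y + y^2/2 + \<bar>y\<bar>^3 * exp \<bar>y\<bar> / 6"
proof -
  obtain t where t: "\<bar>t\<bar> \<le> \<bar>y\<bar>" and e: "exp y = (\<Sum>m<3. y^m / fact m) + exp t / fact 3 * y^3"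
    using Maclaurin_exp_le[of y 3] by blast
  have s: "(\<Sum>m<3. y^m / fact m) = 1 + y + y^2/2"
    by (simp add: numeral_3_eq_3 power2_eq_square)
  have "exp t * y^3 \<le> exp t * \<bar>y\<bar>^3"
    by (intro mult_left_mono) (auto simp: power_abs[symmetric])
  also have "\<dots> \<le> exp \<bar>y\<bar> * \<bar>y\<bar>^3"
    using t by (intro mult_right_mono) auto
  finally have "exp t * y^3 \<le> exp \<bar>y\<bar> * \<bar>y\<bar>^3" .
  hence "exp t / fact 3 * y^3 \<le> \<bar>y\<bar>^3 * exp \<bar>y\<bar> / 6"
    by (simp add: fact_numeral field_simps)
  thus ?thesis using e s by linarith
qed

lemma D_bound:
  fixes p t :: real
  assumes p: "0 \<le> p" "p \<le> 1"
  shows "1 - p + p * exp t \<le> exp (p*t + p*(1-p)*(t^2/2 + \<bar>t\<bar>^3 * exp \<bar>t\<bar> / 6))"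
proof -
  define c where "c = \<bar>t\<bar>^3 * exp \<bar>t\<bar> / 6"
  have c0: "c \<ge> 0" by (simp add: c_def)
  define h where "h = (1-p) * exp (-p*t) + p * exp ((1-p)*t)"
  have fac: "1 - p + p * exp t = exp (p*t) * h"
    unfolding h_def by (simp add: algebra_simps flip: exp_add)
  have e1: "exp (-p*t) \<le> 1 - p*t + p^2*t^2/2 + p^3 * c"
  proof -
    have "exp (-p*t) \<le> 1 + (-p*t) + (-p*t)^2/2 + \<bar>-p*t\<bar>^3 * exp \<bar>-p*t\<bar> / 6" by (rule exp_rem)
    also have "\<bar>-p*t\<bar>^3 * exp \<bar>-p*t\<bar> / 6 \<le> p^3 * c"
    proof -
      have "exp \<bar>-p*t\<bar> \<le> exp \<bar>t\<bar>" using p by (simp add: abs_mult mult_left_le_one_le)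
      hence "\<bar>-p*t\<bar>^3 * exp \<bar>-p*t\<bar> \<le> \<bar>-p*t\<bar>^3 * exp \<bar>t\<bar>" by (intro mult_left_mono) auto
      thus ?thesis using p by (simp add: c_def abs_mult power_mult_distrib)
    qed
    finally show ?thesis by (simp add: power_mult_distrib)
  qed
  have e2: "exp ((1-p)*t) \<le> 1 + (1-p)*t + (1-p)^2*t^2/2 + (1-p)^3 * c"
  proof -
    have "exp ((1-p)*t) \<le> 1 + ((1-p)*t) + ((1-p)*t)^2/2 + \<bar>(1-p)*t\<bar>^3 * exp \<bar>(1-p)*t\<bar> / 6" by (rule exp_rem)
    also have "\<bar>(1-p)*t\<bar>^3 * exp \<bar>(1-p)*t\<bar> / 6 \<le> (1-p)^3 * c"
    proof -
      have "exp \<bar>(1-p)*t\<bar> \<le> exp \<bar>t\<bar>" using p by (simp add: abs_mult mult_left_le_one_le)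
      hence "\<bar>(1-p)*t\<bar>^3 * exp \<bar>(1-p)*t\<bar> \<le> \<bar>(1-p)*t\<bar>^3 * exp \<bar>t\<bar>" by (intro mult_left_mono) auto
      thus ?thesis using p by (simp add: c_def abs_mult power_mult_distrib)
    qed
    finally show ?thesis by (simp add: power_mult_distrib)
  qed
  have "h \<le> (1-p) * (1 - p*t + p^2*t^2/2 + p^3 * c) + p * (1 + (1-p)*t + (1-p)^2*t^2/2 + (1-p)^3 * c)"
    unfolding h_def using p e1 e2 by (intro add_mono mult_left_mono) auto
  also have "\<dots> = 1 + p*(1-p)*t^2/2 + p*(1-p)*(p^2 + (1-p)^2)*c"
    by (simp add: field_simps power2_eq_square power3_eq_cube)
  also have "\<dots> \<le> 1 + p*(1-p)*t^2/2 + p*(1-p)*1*c"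
  proof -
    have "p^2 + (1-p)^2 \<le> 1"
    proof -
      have "p^2 + (1-p)^2 = 1 - 2*p*(1-p)" by (simp add: algebra_simps power2_eq_square)
      moreover have "0 \<le> p*(1-p)" using p by simp
      ultimately show ?thesis by linarith
    qed
    hence "p*(1-p)*(p^2 + (1-p)^2)*c \<le> p*(1-p)*1*c"
      using p c0 by (intro mult_right_mono mult_left_mono) auto
    thus ?thesis by linarith
  qed
  also have "\<dots> \<le> exp (p*(1-p)*(t^2/2 + c))"
    using exp_ge_add_one_self[of "p*(1-p)*(t^2/2 + c)"] by (simp add: algebra_simps)
  finally have "h \<le> exp (p*(1-p)*(t^2/2 + c))" .
  hence "exp (p*t) * h \<le> exp (p*t) * exp (p*(1-p)*(t^2/2 + c))"
    by (intro mult_left_mono) auto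
  thus ?thesis unfolding fac c_def by (simp flip: exp_add)
qed

lemma prob_main:
  fixes p th k :: real and n1 n2 :: nat
  assumes p: "0 < p" "p < 1" and th: "0 \<le> th"
  defines "Q \<equiv> p*(1-p)*(th^2/2 + th^3 * exp th / 6)"
  shows "measure_pmf.prob (pair_pmf (binomial_pmf n1 p) (binomial_pmf n2 p)) {(z1, z2). real z1 = real z2 + k}
    \<le> exp (real n1 * (p*th + Q) + real n2 * (-p*th + Q) - th*k) * sqrt (exp th / (2*(real n1+1)*p*(1-p)))"
proof -
  define P where "P = pair_pmf (binomial_pmf n1 p) (binomial_pmf n2 p)"
  define A where "A = {(z1::nat, z2::nat). real z1 = real z2 + k}"
  define B where "B = A \<inter> ({..n1} \<times> {..n2})"
  define D1 where "D1 = 1 - p + p * exp th"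
  define D2 where "D2 = 1 - p + p * exp (-th)"
  define q1 where "q1 = p * exp th / D1"
  define q2 where "q2 = p * exp (-th) / D2"
  define g1 where "g1 a = real (n1 choose a) * q1^a * (1-q1)^(n1-a)" for a
  define g2 where "g2 b = real (n2 choose b) * q2^b * (1-q2)^(n2-b)" for b
  define K where "K = D1^n1 * D2^n2 * exp (- th * k)"
  have pp: "p \<in> {0..1}" using p by simp
  have D1: "D1 > 0" "D1 \<le> exp th"
  proof -
    show "D1 > 0" unfolding D1_def using p by (smt (verit) exp_gt_zero mult_pos_pos)
    have "1 \<le> exp th" using th by simp
    hence "1 - p \<le> (1-p) * exp th" using p by (simp add: mult_le_cancel_left1)
    thus "D1 \<le> exp th" unfolding D1_def by (simp add: algebra_simps)
  qed
  have D2: "D2 > 0" unfolding D2_def using p by (smt (verit) exp_gt_zero mult_pos_pos)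
  have q1: "0 < q1" "q1 < 1" using D1 p unfolding q1_def D1_def by (auto simp: field_simps)
  have q2: "0 < q2" "q2 < 1" using D2 p unfolding q2_def D2_def by (auto simp: field_simps)
  have g2nn: "g2 b \<ge> 0" for b using q2 by (simp add: g2_def)
  have g1nn: "g1 a \<ge> 0" for a using q1 by (simp add: g1_def)
  define G where "G = sqrt (1 / (2*(real n1+1)*q1*(1-q1)))"
  have G0: "G \<ge> 0" unfolding G_def using q1 by (intro real_sqrt_ge_zero) simp
  have g1G: "g1 a \<le> G" for a
    unfolding G_def g1_def by (rule real_le_rsqrt) (rule binom_pmf_sq[OF q1])
  have prob: "measure_pmf.prob P A = sum (pmf P) B"
  proof -
    have "set_pmf P = {..n1} \<times> {..n2}" using p by (simp add: P_def)
    hence "measure_pmf.prob P A = measure_pmf.prob P B"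
      using measure_Int_set_pmf[of P A] by (simp add: B_def)
    also have "\<dots> = sum (pmf P) B" by (rule measure_measure_pmf_finite) (simp add: B_def)
    finally show ?thesis .
  qed
  have pmfB: "pmf P x = K * g1 (fst x) * g2 (snd x)" if "x \<in> B" for x
  proof -
    obtain a b where x: "x = (a,b)" by fastforce
    have ab: "real a = real b + k" using that x by (simp add: B_def A_def)
    have t1: "pmf (binomial_pmf n1 p) a = D1^n1 * exp (- th * a) * g1 a"
      using binom_tilt[OF p, where t=th and n=n1 and j=a] pp by (simp add: g1_def q1_def D1_def)
    have t2: "pmf (binomial_pmf n2 p) b = D2^n2 * exp (- (-th) * b) * g2 b"
      using binom_tilt[OF p, where t="-th" and n=n2 and j=b] pp by (simp add: g2_def q2_def D2_def)
    have ee: "exp (- th * a) * exp (- (-th) * b) = exp (- th * k)"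
      unfolding ab by (simp add: algebra_simps flip: exp_add)
    have "pmf P x = (D1^n1 * exp (- th * a) * g1 a) * (D2^n2 * exp (- (-th) * b) * g2 b)"
      by (simp add: P_def x pmf_pair t1 t2)
    also have "\<dots> = D1^n1 * D2^n2 * (exp (- th * a) * exp (- (-th) * b)) * g1 a * g2 b"
      by (simp only: mult_ac)
    also have "\<dots> = K * g1 a * g2 b" unfolding ee K_def by simp
    finally show ?thesis by (simp add: x)
  qed
  have K0: "K \<ge> 0" using D1 D2 by (simp add: K_def)
  have "sum (pmf P) B = (\<Sum>x\<in>B. K * g1 (fst x) * g2 (snd x))"
    using pmfB by (rule sum.cong[OF refl])
  also have "\<dots> \<le> (\<Sum>x\<in>B. K * G * g2 (snd x))"
    using K0 g1G g2nn by (intro sum_mono mult_right_mono mult_left_mono) auto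
  also have "\<dots> = K * G * (\<Sum>x\<in>B. g2 (snd x))" by (simp add: sum_distrib_left)
  also have "(\<Sum>x\<in>B. g2 (snd x)) \<le> 1"
  proof -
    have inj: "inj_on snd B" unfolding inj_on_def B_def A_def by auto
    have "(\<Sum>x\<in>B. g2 (snd x)) = (\<Sum>b\<in>snd ` B. g2 b)"
      using sum.reindex[OF inj, of g2] by simp
    also have "\<dots> \<le> (\<Sum>b\<le>n2. g2 b)"
      by (rule sum_mono2) (auto simp: B_def g2nn)
    also have "\<dots> = (q2 + (1-q2))^n2" unfolding g2_def by (simp only: binomial_ring)
    finally show ?thesis by simp
  qed
  hence "K * G * (\<Sum>x\<in>B. g2 (snd x)) \<le> K * G * 1"
    using K0 G0 by (intro mult_left_mono) auto
  finally have main: "measure_pmf.prob P A \<le> K * G" using prob by simp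
  have GG: "G \<le> sqrt (exp th / (2*(real n1+1)*p*(1-p)))"
  proof -
    have "q1 * (1-q1) = p*(1-p)*exp th / D1^2"
      using D1 unfolding q1_def D1_def by (simp add: field_simps power2_eq_square)
    also have "\<dots> \<ge> p*(1-p)*exp th / (exp th)^2"
      using D1 p by (intro divide_left_mono power_mono mult_pos_pos) auto
    finally have "q1*(1-q1) \<ge> p*(1-p) / exp th" by (simp add: power2_eq_square)
    hence "2*(real n1+1)*(p*(1-p) / exp th) \<le> 2*(real n1+1)*(q1*(1-q1))"
      by (intro mult_left_mono) auto
    hence "1 / (2*(real n1+1)*(q1*(1-q1))) \<le> 1 / (2*(real n1+1)*(p*(1-p) / exp th))"
      using p q1 by (intro divide_left_mono) (auto intro!: mult_pos_pos divide_pos_pos)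
    thus ?thesis unfolding G_def by (simp add: field_simps)
  qed
  have KK: "K \<le> exp (real n1 * (p*th + Q) + real n2 * (-p*th + Q) - th*k)"
  proof -
    have b1: "D1 \<le> exp (p*th + Q)"
      using D_bound[of p th] p th unfolding D1_def Q_def by simp
    have b2: "D2 \<le> exp (-p*th + Q)"
      using D_bound[of p "-th"] p th unfolding D2_def Q_def by simp
    have "D1^n1 \<le> exp (p*th + Q)^n1" using b1 D1 by (intro power_mono) auto
    moreover have "D2^n2 \<le> exp (-p*th + Q)^n2" using b2 D2 by (intro power_mono) auto
    ultimately have "D1^n1 * D2^n2 \<le> exp (p*th + Q)^n1 * exp (-p*th + Q)^n2"
      using D1 D2 by (intro mult_mono) auto
    hence "K \<le> exp (p*th + Q)^n1 * exp (-p*th + Q)^n2 * exp (- th * k)"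
      unfolding K_def by (intro mult_right_mono) auto
    also have "\<dots> = exp (real n1 * (p*th + Q) + real n2 * (-p*th + Q) - th*k)"
      unfolding exp_of_nat_mult[symmetric] by (simp flip: exp_add)
    finally show ?thesis .
  qed
  have "K * G \<le> exp (real n1 * (p*th + Q) + real n2 * (-p*th + Q) - th*k) * sqrt (exp th / (2*(real n1+1)*p*(1-p)))"
    using KK GG K0 G0 by (intro mult_mono) auto
  thus ?thesis using main unfolding P_def A_def by linarith
qed



lemma pw:
  fixes p S T n s r :: real
  assumes p: "0 < p" "p < 1" and n: "n > 0" and s: "s \<ge> 1" and s3: "s^3 = p*(1-p)*n"
    and r: "0 \<le> r" "r \<le> 1/4" and rS: "p*S = r* s^2"
    and x: "20 \<le> p*S / sqrt (p*(1-p)*n)" and T: "\<bar>T\<bar> \<le> n/2"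
  defines "V \<equiv> p*(1-p)*(2*n-T)"
  defines "th \<equiv> 2*p*S/V"
  shows "0 \<le> th" "th \<le> 1/2" "0 < S" "S \<le> n/2"
    "0 \<le> V * th^3 * exp th / 6" "V * th^3 * exp th / 6 \<le> 4 * exp 1 / 3 * r^3"
    "sqrt (exp th / (2*(n-S+1)*p*(1-p))) \<le> S / (2*pi*(1-p)*n)"
proof -
  define V0 where "V0 = p*(1-p)*n"
  have pq: "p*(1-p) > 0" using p by simp
  have V0: "V0 > 0" "V0 = s^3" using pq n s3 by (auto simp: V0_def)
  have sV0: "sqrt V0 > 0" using V0 by simp
  have pS: "p*S \<ge> 20 * sqrt V0" using x sV0 by (simp add: V0_def pos_le_divide_eq)
  hence pSpos: "p*S > 0" using sV0 by linarith
  thus S: "0 < S" using p by (simp add: zero_less_mult_iff)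
  have VV: "V \<ge> V0 * (3/2)"
  proof -
    have "2*n - T \<ge> n * (3/2)" using T by linarith
    hence "p*(1-p)*(2*n-T) \<ge> p*(1-p)*(n*(3/2))" using pq by (intro mult_left_mono) auto
    thus ?thesis by (simp add: V_def V0_def)
  qed
  have Vpos: "V > 0" using VV V0 by linarith
  have V0V: "V0 \<le> V" using VV V0 by linarith
  have "0 \<le> 2*(p*S)/V" using pSpos Vpos by simp
  thus th0: "0 \<le> th" unfolding th_def by (simp add: mult.assoc)
  have th_le: "th \<le> 2*(p*S)/V0"
    unfolding th_def using pSpos Vpos V0 V0V by (simp add: frac_le)
  have "2*(p*S)/V0 = 2*r/s" using V0 s rS by (simp add: power2_eq_square power3_eq_cube field_simps)
  also have "\<dots> \<le> 2*r" using s r by (simp add: divide_le_eq mult_le_cancel_left1 mult_left_mono)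
  finally show th1: "th \<le> 1/2" using th_le r by linarith
  show "S \<le> n/2"
  proof -
    have "S * (p*(1-p)) \<le> S * p" using S p by (simp add: mult_left_mono)
    also have "\<dots> = r* s^2" using rS by (simp add: mult.commute)
    also have "\<dots> \<le> s^3/4"
    proof -
      have "r* s^2 \<le> (1/4)* s^2" using r by (intro mult_right_mono) auto
      also have "\<dots> \<le> (1/4)* s^3" using s by (simp add: power2_eq_square power3_eq_cube mult_left_mono mult_le_cancel_left1)
      finally show ?thesis by simp
    qed
    finally have "S * (p*(1-p)) \<le> (n/4) * (p*(1-p))" using s3 by (simp add: algebra_simps)
    hence "S \<le> n/4" using pq mult_le_cancel_right_pos[OF pq, of S "n/4"] by linarith
    thus ?thesis using n by linarith
  qed
  note Sn = this
  show "0 \<le> V * th^3 * exp th / 6" using Vpos th0 by simp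
  have "V * th^3 = 8*(p*S)^3 / V^2" unfolding th_def using Vpos by (simp add: power2_eq_square power3_eq_cube field_simps)
  also have "\<dots> \<le> 8*(p*S)^3 / V0^2"
    using pSpos V0 V0V by (intro divide_left_mono power_mono mult_pos_pos) auto
  also have "\<dots> = 8 * r^3" using rS V0 s by (simp add: power2_eq_square power3_eq_cube field_simps)
  finally have a: "V * th^3 \<le> 8*r^3" .
  have b: "exp th \<le> exp 1" using th1 by simp
  have "V * th^3 * exp th \<le> 8*r^3 * exp 1" using mult_mono[OF a b] r by simp
  thus "V * th^3 * exp th / 6 \<le> 4 * exp 1 / 3 * r^3" by (simp add: mult_ac)
  show "sqrt (exp th / (2*(n-S+1)*p*(1-p))) \<le> S / (2*pi*(1-p)*n)"
  proof -
    have x2: "p*S^2 \<ge> 400 * ((1-p)*n)"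
    proof -
      have "(p*S)^2 \<ge> (20 * sqrt V0)^2" using pS sV0 by (intro power_mono) auto
      hence "(p*S)^2 \<ge> 400 * V0" using V0 by (simp add: power_mult_distrib)
      hence "p * (p*S^2) \<ge> p * (400*((1-p)*n))" by (simp add: V0_def power2_eq_square algebra_simps)
      thus ?thesis using p by simp
    qed
    have e: "exp th \<le> 3"
    proof -
      have "exp th \<le> exp 1" using th1 by simp
      thus ?thesis using exp_le by linarith
    qed
    have "pi^2 \<le> (4::real)^2" using pi_less_4 pi_gt_zero by (intro power_mono) auto
    hence pi2: "pi^2 \<le> 16" by simp
    define c where "c = (1-p)*n*n"
    have c0: "c > 0" using p n by (simp add: c_def)
    have "4*pi^2*c \<le> 4*16*c" using pi2 c0 by simp
    hence "exp th * (4*pi^2*c) \<le> 3 * (4*16*c)" using mult_mono[OF e, of "4*pi^2*c" "4*16*c"] c0 by simp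
    also have "\<dots> \<le> 400 * c" using c0 by simp
    also have "\<dots> = 2*(n/2) * (400*((1-p)*n))" by (simp add: c_def)
    also have "\<dots> \<le> 2*(n-S+1) * (p*S^2)"
    proof (rule mult_mono)
      show "2*(n/2) \<le> 2*(n-S+1)" using Sn by simp
      show "400*((1-p)*n) \<le> p*S^2" using x2 by simp
      show "0 \<le> 2*(n-S+1)" using Sn n by simp
      show "0 \<le> 400*((1-p)*n)" using p n by simp
    qed
    finally have key0: "exp th * (4*pi^2*c) \<le> 2*(n-S+1) * (p*S^2)" .
    have key: "exp th * (4*pi^2*((1-p)*n)*n) \<le> 2*(n-S+1) * (p*S^2)"
      using key0 by (simp add: c_def mult_ac)
    have d1: "2*(n-S+1)*p*(1-p) > 0" using Sn n p by (intro mult_pos_pos) auto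
    have d2: "(2*pi*(1-p)*n)^2 > 0" using p n by simp
    have "exp th / (2*(n-S+1)*p*(1-p)) \<le> (S / (2*pi*(1-p)*n))^2"
    proof -
      have "exp th * (2*pi*(1-p)*n)^2 = (1-p) * (exp th * (4*pi^2*((1-p)*n)*n))"
        by (simp add: power2_eq_square algebra_simps)
      also have "\<dots> \<le> (1-p) * (2*(n-S+1) * (p*S^2))" using key p by (intro mult_left_mono) auto
      also have "\<dots> = S^2 * (2*(n-S+1)*p*(1-p))" by (simp add: algebra_simps)
      finally have "exp th * (2*pi*(1-p)*n)^2 \<le> S^2 * (2*(n-S+1)*p*(1-p))" .
      thus ?thesis using d1 d2 by (simp add: power_divide divide_simps)
    qed
    hence "sqrt (exp th / (2*(n-S+1)*p*(1-p))) \<le> sqrt ((S / (2*pi*(1-p)*n))^2)"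
      by (rule real_sqrt_le_mono)
    also have "\<dots> = S / (2*pi*(1-p)*n)" using S p n by simp
    finally show ?thesis .
  qed
qed



lemma expo_id:
  fixes p S T n :: real
  assumes p: "0 < p" "p < 1" and nT: "2*n - T > 0"
  defines "V \<equiv> p*(1-p)*(2*n-T)"
  defines "th \<equiv> 2*p*S/V"
  defines "Q \<equiv> p*(1-p)*(th^2/2 + th^3 * exp th / 6)"
  shows "(n-S)*(p*th + Q) + (n+S-T)*(-p*th + Q) - th*(p*T)
     = - (2 * p * S^2) / ((1 - p) * (2 * n - T)) + V * th^3 * exp th / 6"
proof -
  have V: "V > 0" using p nT by (simp add: V_def)
  have thV: "th * V = 2*p*S" using V by (simp add: th_def)
  have "(n-S)*(p*th + Q) + (n+S-T)*(-p*th + Q) - th*(p*T) = -2*p*S*th + (2*n-T)*Q"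
    by (simp add: algebra_simps)
  also have "(2*n-T)*Q = V*th^2/2 + V * th^3 * exp th / 6"
    by (simp add: Q_def V_def algebra_simps)
  also have "-2*p*S*th + (V*th^2/2 + V * th^3 * exp th / 6) = -(p*S*th) + V * th^3 * exp th / 6"
  proof -
    have "V*th^2/2 = (th*V)*th/2" by (simp add: power2_eq_square)
    also have "\<dots> = p*S*th" using thV by simp
    finally show ?thesis by simp
  qed
  also have "p*S*th = (2 * p * S^2) / ((1 - p) * (2 * n - T))"
  proof -
    define D where "D = (1 - p) * (2 * n - T)"
    have D: "D > 0" using p nT by (simp add: D_def)
    have VD: "V = p*D" by (simp add: V_def D_def)
    have "th = 2*S/D" unfolding th_def VD using p D by simp
    thus ?thesis using D by (simp add: D_def[symmetric] power2_eq_square)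
  qed
  finally show ?thesis by simp
qed


theorem mainTheorem13:
  fixes p S T :: "nat \<Rightarrow> real"
  assumes p_prob: "\<forall>N. 0 \<le> p N \<and> p N \<le> 1"
    and var_inf: "filterlim (\<lambda>N. p N * (1 - p N) * real N) at_top sequentially"
    and int1: "\<forall>N. real N - S N \<in> \<nat>"
    and int2: "\<forall>N. real N + S N - T N \<in> \<nat>"
    and S_big: "filterlim (\<lambda>N. p N * S N / sqrt (p N * (1 - p N) * real N)) at_top sequentially"
    and S_small: "(\<lambda>N. p N * S N) \<in> o(\<lambda>N. (p N * (1 - p N) * real N) powr (2/3))"
    and T_small: "T \<in> o(\<lambda>N. real N)"
  shows "\<exists>\<epsilon> :: nat \<Rightarrow> real. \<epsilon> \<longlonglongrightarrow> 0 \<and>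
    (\<forall>\<^sub>F N in sequentially.
      measure_pmf.prob
        (pair_pmf (binomial_pmf (nat \<lfloor>real N - S N\<rfloor>) (p N))
                  (binomial_pmf (nat \<lfloor>real N + S N - T N\<rfloor>) (p N)))
        {(z1, z2). real z1 = real z2 + p N * T N}
      < S N / (2 * pi * (1 - p N) * real N)
          * exp (- (2 * p N * (S N)\<^sup>2) / ((1 - p N) * (2 * real N - T N)) + \<epsilon> N)
        + 3 / (pi * p N * S N) * exp (- (9 * p N * (S N)\<^sup>2) / (8 * (1 - p N) * real N)))"
proof -
  define V0 where "V0 N = p N * (1 - p N) * real N" for N
  define V where "V N = p N * (1 - p N) * (2 * real N - T N)" for N
  define th where "th N = 2 * p N * S N / V N" for N
  define eps where "eps N = V N * th N ^ 3 * exp (th N) / 6" for N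
  define r where "r N = p N * S N / (V0 N powr (2/3))" for N
  have "r = (\<lambda>x. p x * S x / (p x * (1 - p x) * real x) powr (2 / 3))"
    by (rule ext) (simp add: r_def V0_def)
  hence r0: "r \<longlonglongrightarrow> 0" using smalloD_tendsto[OF S_small] by simp
  have Tn: "(\<lambda>N. T N / real N) \<longlonglongrightarrow> 0" using smalloD_tendsto[OF T_small] .
  have ev1: "eventually (\<lambda>N. 1 \<le> V0 N) sequentially"
    using var_inf unfolding filterlim_at_top V0_def by blast
  have ev2: "eventually (\<lambda>N. 20 \<le> p N * S N / sqrt (V0 N)) sequentially"
    using S_big unfolding filterlim_at_top V0_def by blast
  have ev3: "eventually (\<lambda>N. r N < 1/4) sequentially" using order_tendstoD(2)[OF r0, of "1/4"] by simp
  have ev4: "eventually (\<lambda>N. \<bar>T N / real N\<bar> < 1/2) sequentially"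
    using order_tendstoD(2)[OF tendsto_rabs[OF Tn], of "1/2"] by simp
  have evall: "eventually (\<lambda>N. 1 \<le> V0 N \<and> 20 \<le> p N * S N / sqrt (V0 N) \<and> r N < 1/4 \<and> \<bar>T N / real N\<bar> < 1/2) sequentially"
    using ev1 ev2 ev3 ev4 by (intro eventually_conj)
  have key: "eventually (\<lambda>N. 0 \<le> eps N \<and> eps N \<le> 4 * exp 1 / 3 * r N ^ 3 \<and>
      measure_pmf.prob
        (pair_pmf (binomial_pmf (nat \<lfloor>real N - S N\<rfloor>) (p N))
                  (binomial_pmf (nat \<lfloor>real N + S N - T N\<rfloor>) (p N)))
        {(z1, z2). real z1 = real z2 + p N * T N}
      < S N / (2 * pi * (1 - p N) * real N)
          * exp (- (2 * p N * (S N)\<^sup>2) / ((1 - p N) * (2 * real N - T N)) + eps N)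
        + 3 / (pi * p N * S N) * exp (- (9 * p N * (S N)\<^sup>2) / (8 * (1 - p N) * real N))) sequentially"
  proof (rule eventually_mono[OF evall])
    fix N assume H: "1 \<le> V0 N \<and> 20 \<le> p N * S N / sqrt (V0 N) \<and> r N < 1/4 \<and> \<bar>T N / real N\<bar> < 1/2"
    have pb: "0 \<le> p N" "p N \<le> 1" using p_prob by auto
    have V0p: "V0 N > 0" using H by linarith
    have pp: "0 < p N" "p N < 1" "real N > 0"
    proof -
      have "p N \<noteq> 0" "1 - p N \<noteq> 0" using V0p by (auto simp: V0_def)
      moreover have "real N \<noteq> 0" using V0p by (cases "N = 0") (auto simp: V0_def)
      ultimately show "0 < p N" "p N < 1" "real N > 0" using pb by auto
    qed
    define s where "s = V0 N powr (1/3)"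
    have s1: "s \<ge> 1" unfolding s_def using H by (intro ge_one_powr_ge_zero) auto
    have s3: "s^3 = V0 N"
    proof -
      have "s^3 = s powr (real 3)" using s1 by (simp add: powr_realpow)
      also have "\<dots> = V0 N" unfolding s_def using V0p by (simp add: powr_powr)
      finally show ?thesis .
    qed
    have s2: "V0 N powr (2/3) = s^2"
    proof -
      have "s^2 = s powr (real 2)" using s1 by (simp add: powr_realpow)
      also have "\<dots> = V0 N powr (2/3)" unfolding s_def using V0p by (simp add: powr_powr)
      finally show ?thesis by simp
    qed
    have sqp: "sqrt (V0 N) > 0" using V0p by simp
    have pSpos: "p N * S N > 0"
    proof -
      have "20 \<le> p N * S N / sqrt (V0 N)" using H by blast
      hence "20 * sqrt (V0 N) \<le> p N * S N" using sqp by (simp add: pos_le_divide_eq)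
      thus ?thesis using sqp by linarith
    qed
    have r0N: "0 \<le> r N" unfolding r_def using pSpos V0p by simp
    have rS: "p N * S N = r N * s^2" unfolding r_def s2[symmetric] using V0p by simp
    have Tb: "\<bar>T N\<bar> \<le> real N / 2"
    proof -
      have h1: "\<bar>T N / real N\<bar> < 1/2" using H by blast
      have h2: "\<bar>T N\<bar> / real N = \<bar>T N / real N\<bar>" using abs_div_pos[OF pp(3), of "T N"] .
      have "\<bar>T N\<bar> / real N < 1/2" using h1 h2 by linarith
      thus ?thesis using pp by (simp add: divide_less_eq)
    qed
    note PW = pw[OF pp(1) pp(2) pp(3) s1, where S="S N" and r="r N" and T="T N"]
    have s3': "s^3 = p N * (1 - p N) * real N" using s3 by (simp add: V0_def)
    have xx: "20 \<le> p N * S N / sqrt (p N * (1 - p N) * real N)" using H by (simp add: V0_def)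
    have rl: "r N \<le> 1/4" using H by simp
    note PW' = PW[OF s3' r0N rl rS xx Tb]
    have thN: "th N = 2 * p N * S N / (p N * (1 - p N) * (2 * real N - T N))" by (simp add: th_def V_def)
    have epsN: "eps N = p N * (1 - p N) * (2 * real N - T N) * (2 * p N * S N / (p N * (1 - p N) * (2 * real N - T N)))^3 * exp (2 * p N * S N / (p N * (1 - p N) * (2 * real N - T N))) / 6"
      by (simp add: eps_def th_def V_def)
    have e0: "0 \<le> eps N" using PW'(5) unfolding epsN .
    have e1: "eps N \<le> 4 * exp 1 / 3 * r N ^ 3" using PW'(6) unfolding epsN .
    have th0: "0 \<le> th N" using PW'(1) unfolding thN .
    have Spos: "0 < S N" using PW'(3) .
    have sq: "sqrt (exp (th N) / (2*(real N - S N + 1)*p N*(1-p N))) \<le> S N / (2*pi*(1-p N)*real N)"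
      using PW'(7) unfolding thN .
    obtain m1 where m1: "real N - S N = real m1" using int1 Nats_cases by metis
    obtain m2 where m2: "real N + S N - T N = real m2" using int2 Nats_cases by metis
    have n1: "nat \<lfloor>real N - S N\<rfloor> = m1" using m1 by simp
    have n2: "nat \<lfloor>real N + S N - T N\<rfloor> = m2" using m2 by simp
    define Q where "Q = p N*(1-p N)*(th N^2/2 + th N^3 * exp (th N) / 6)"
    have PM: "measure_pmf.prob (pair_pmf (binomial_pmf m1 (p N)) (binomial_pmf m2 (p N))) {(z1, z2). real z1 = real z2 + p N * T N}
      \<le> exp (real m1 * (p N * th N + Q) + real m2 * (- p N * th N + Q) - th N * (p N * T N)) * sqrt (exp (th N) / (2*(real m1+1)*p N*(1-p N)))"
      using prob_main[OF pp(1) pp(2) th0, of m1 m2 "p N * T N"] unfolding Q_def .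
    have nT: "2 * real N - T N > 0" using Tb pp by linarith
    have EX: "real m1 * (p N * th N + Q) + real m2 * (- p N * th N + Q) - th N * (p N * T N)
        = - (2 * p N * (S N)\<^sup>2) / ((1 - p N) * (2 * real N - T N)) + eps N"
      using expo_id[OF pp(1) pp(2) nT, of "S N"] unfolding epsN[symmetric] unfolding thN[symmetric] m1 m2 Q_def .
    have "measure_pmf.prob
        (pair_pmf (binomial_pmf (nat \<lfloor>real N - S N\<rfloor>) (p N))
                  (binomial_pmf (nat \<lfloor>real N + S N - T N\<rfloor>) (p N)))
        {(z1, z2). real z1 = real z2 + p N * T N}
      \<le> S N / (2 * pi * (1 - p N) * real N) * exp (- (2 * p N * (S N)\<^sup>2) / ((1 - p N) * (2 * real N - T N)) + eps N)"
    proof -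
      have "sqrt (exp (th N) / (2*(real m1+1)*p N*(1-p N))) \<le> S N / (2*pi*(1-p N)*real N)"
        using sq unfolding m1 by (simp add: add.commute)
      hence "exp (- (2 * p N * (S N)\<^sup>2) / ((1 - p N) * (2 * real N - T N)) + eps N) * sqrt (exp (th N) / (2*(real m1+1)*p N*(1-p N)))
          \<le> exp (- (2 * p N * (S N)\<^sup>2) / ((1 - p N) * (2 * real N - T N)) + eps N) * (S N / (2*pi*(1-p N)*real N))"
        by (intro mult_left_mono) auto
      thus ?thesis using PM unfolding n1 n2 EX by (simp only: mult.commute)
    qed
    moreover have "0 < 3 / (pi * p N * S N) * exp (- (9 * p N * (S N)\<^sup>2) / (8 * (1 - p N) * real N))"
      using pp Spos by simp
    ultimately show "0 \<le> eps N \<and> eps N \<le> 4 * exp 1 / 3 * r N ^ 3 \<and>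
      measure_pmf.prob
        (pair_pmf (binomial_pmf (nat \<lfloor>real N - S N\<rfloor>) (p N))
                  (binomial_pmf (nat \<lfloor>real N + S N - T N\<rfloor>) (p N)))
        {(z1, z2). real z1 = real z2 + p N * T N}
      < S N / (2 * pi * (1 - p N) * real N)
          * exp (- (2 * p N * (S N)\<^sup>2) / ((1 - p N) * (2 * real N - T N)) + eps N)
        + 3 / (pi * p N * S N) * exp (- (9 * p N * (S N)\<^sup>2) / (8 * (1 - p N) * real N))"
      using e0 e1 by linarith
  qed
  have epslim: "eps \<longlonglongrightarrow> 0"
  proof (rule tendsto_sandwich[of "\<lambda>_. 0" eps sequentially "\<lambda>N. 4 * exp 1 / 3 * r N ^ 3"])
    show "eventually (\<lambda>N. 0 \<le> eps N) sequentially" using key by (rule eventually_mono) auto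
    show "eventually (\<lambda>N. eps N \<le> 4 * exp 1 / 3 * r N ^ 3) sequentially" using key by (rule eventually_mono) auto
    show "(\<lambda>_. 0::real) \<longlonglongrightarrow> 0" by simp
    have "(\<lambda>N. 4 * exp 1 / 3 * r N ^ 3) \<longlonglongrightarrow> 4 * exp 1 / 3 * 0 ^ 3"
      by (intro tendsto_intros r0)
    thus "(\<lambda>N. 4 * exp 1 / 3 * r N ^ 3) \<longlonglongrightarrow> 0" by simp
  qed
  show ?thesis
    using epslim key by (intro exI[of _ eps] conjI) (auto elim: eventually_mono)
qed

end
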